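(* Let $(\mathfrak{h},[\;,\;],\langle\;,\;\rangle)$ be a Lorentzian nilpotent Lie algebra whose center $\mathrm{Z}(\mathfrak{h})$ is nondegenerate and positive definite, and let $(\mathfrak{g},[\;,\;]_{\mathfrak{g}},\langle\;,\;\rangle_{\mathfrak{g}})$, $(\mathrm{Z}(\mathfrak{h}),\langle\;,\;\rangle_z)$, $\omega$ be as in the context. Suppose that for all $u,v,w\in\mathfrak{g}$, $\omega(\mathrm{ad}_u^*v,w)+\omega(v,\mathrm{ad}_u^*w)=0.$ Then the endomorphism $D:\mathfrak{g}\to\mathfrak{g}$ defined by $\langle Du,v\rangle_{\mathfrak{g}}=\mathrm{tr}(\omega_u^*\circ\omega_v)$ is a derivation of the Lie algebra $(\mathfrak{g},[\;,\;]_{\mathfrak{g}})$.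
   Context: Setting: $\mathfrak{h}$ is a real finite-dimensional nilpotent Lie algebra with a Lorentzian inner product (signature $(1,n-1)$) whose center $\mathrm{Z}(\mathfrak{h})$ is nondegenerate and the inner product restricted to it, denoted $\langle\;,\;\rangle_z$, is positive definite. Put $\mathfrak{g}=\mathrm{Z}(\mathfrak{h})^\perp$ with the restricted (Lorentzian) inner product $\langle\;,\;\rangle_{\mathfrak{g}}$, so $\mathfrak{h}=\mathfrak{g}\oplus\mathrm{Z}(\mathfrak{h})$ orthogonally. For $u,v\in\mathfrak{g}$ write $[u,v]=[u,v]_{\mathfrak{g}}+\omega(u,v)$ with $[u,v]_{\mathfrak{g}}\in\mathfrak{g}$ and $\omega(u,v)\in\mathrm{Z}(\mathfrak{h})$; then $(\mathfrak{g},[\;,\;]_{\mathfrak{g}})$ is a Lie algebra and $\omega$ is a $2$-cocycle: $\omega([u,v]_{\mathfrak{g}},w)+\omega([v,w]_{\mathfrak{g}},u)+\omega([w,u]_{\mathfrak{g}},v)=0$. For $u\in\mathfrak{g}$, $\mathrm{ad}_u:\mathfrak{g}\to\mathfrak{g}$ is $v\mapsto[u,v]_{\mathfrak{g}}$ and $\mathrm{ad}_u^*$ is its adjoint with respect to $\langle\;,\;\rangle_{\mathfrak{g}}$; $\omega_u:\mathfrak{g}\to\mathrm{Z}(\mathfrak{h})$ is $v\mapsto\omega(u,v)$, and $\omega_u^*:\mathrm{Z}(\mathfrak{h})\to\mathfrak{g}$ is defined by $\langle\omega_u^*(x),v\rangle_{\mathfrak{g}}=\langle\omega(u,v),x\rangle_z$.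 *)

theory Defs
  imports "HOL-Analysis.Analysis"
begin

text \<open>Real finite-dimensional vector spaces are modelled by types of class euclidean_space;
  the standard inner product of such a type is used ONLY to define the (basis independent)
  trace of an endomorphism.  All metrics of the paper are separate bilinear forms.\<close>

definition lie_algebra :: "('a::real_vector \<Rightarrow> 'a \<Rightarrow> 'a) \<Rightarrow> bool" where
  "lie_algebra br \<longleftrightarrow> bilinear br \<and> (\<forall>x. br x x = 0) \<and>
     (\<forall>x y z. br x (br y z) + br y (br z x) + br z (br x y) = 0)"

text \<open>Nilpotent: some iterated adjoint product ad_x1 ... ad_xk y always vanishes
  (equivalently the lower central series terminates).\<close>
definition nilpotent_lie :: "('a::real_vector \<Rightarrow> 'a \<Rightarrow> 'a) \<Rightarrow> bool" where
  "nilpotent_lie br \<longleftrightarrow> (\<exists>k. \<forall>xs y. length xs = k \<longrightarrow> foldr br xs y = 0)"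

definition lie_center :: "('a::real_vector \<Rightarrow> 'a \<Rightarrow> 'a) \<Rightarrow> 'a set" where
  "lie_center br = {x. \<forall>y. br x y = 0}"

definition derivation :: "('a::real_vector \<Rightarrow> 'a \<Rightarrow> 'a) \<Rightarrow> ('a \<Rightarrow> 'a) \<Rightarrow> bool" where
  "derivation br D \<longleftrightarrow> linear D \<and> (\<forall>x y. D (br x y) = br (D x) y + br x (D y))"

definition sym_bilinear_form :: "('a::real_vector \<Rightarrow> 'a \<Rightarrow> real) \<Rightarrow> bool" where
  "sym_bilinear_form B \<longleftrightarrow> bilinear B \<and> (\<forall>x y. B x y = B y x)"

definition nondegenerate :: "('a::real_vector \<Rightarrow> 'a \<Rightarrow> real) \<Rightarrow> bool" where
  "nondegenerate B \<longleftrightarrow> (\<forall>x. (\<forall>y. B x y = 0) \<longrightarrow> x = 0)"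

definition positive_definite :: "('a::real_vector \<Rightarrow> 'a \<Rightarrow> real) \<Rightarrow> bool" where
  "positive_definite B \<longleftrightarrow> sym_bilinear_form B \<and> (\<forall>x. x \<noteq> 0 \<longrightarrow> B x x > 0)"

definition negative_definite_on :: "('a::real_vector \<Rightarrow> 'a \<Rightarrow> real) \<Rightarrow> 'a set \<Rightarrow> bool" where
  "negative_definite_on B S \<longleftrightarrow> (\<forall>x\<in>S. x \<noteq> 0 \<longrightarrow> B x x < 0)"

text \<open>Lorentzian = nondegenerate symmetric bilinear form of signature (1, n-1):
  maximal dimension of a negative definite subspace is exactly 1.\<close>
definition lorentzian :: "('a::euclidean_space \<Rightarrow> 'a \<Rightarrow> real) \<Rightarrow> bool" where
  "lorentzian B \<longleftrightarrow> sym_bilinear_form B \<and> nondegenerate B \<and>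
     (\<exists>S. subspace S \<and> dim S = 1 \<and> negative_definite_on B S) \<and>
     (\<forall>S. subspace S \<and> negative_definite_on B S \<longrightarrow> dim S \<le> 1)"

definition adjoint_wrt :: "('a \<Rightarrow> 'a \<Rightarrow> real) \<Rightarrow> ('b \<Rightarrow> 'b \<Rightarrow> real) \<Rightarrow> ('a \<Rightarrow> 'b) \<Rightarrow> 'b \<Rightarrow> 'a" where
  "adjoint_wrt Ba Bb f = (\<lambda>y. THE x. \<forall>v. Ba x v = Bb (f v) y)"

definition lin_trace :: "('a::euclidean_space \<Rightarrow> 'a) \<Rightarrow> real" where
  "lin_trace f = (\<Sum>b\<in>Basis. inner (f b) b)"

text \<open>h = g \<oplus> Z(h) (orthogonal sum), bracket [(u,x),(v,y)] = ([u,v]_g, \<omega>(u,v)).\<close>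
definition ext_bracket :: "('g \<Rightarrow> 'g \<Rightarrow> 'g) \<Rightarrow> ('g \<Rightarrow> 'g \<Rightarrow> 'z) \<Rightarrow> 'g \<times> 'z \<Rightarrow> 'g \<times> 'z \<Rightarrow> 'g \<times> 'z" where
  "ext_bracket brg \<omega> p q = (brg (fst p) (fst q), \<omega> (fst p) (fst q))"

definition sum_form :: "('g \<Rightarrow> 'g \<Rightarrow> real) \<Rightarrow> ('z \<Rightarrow> 'z \<Rightarrow> real) \<Rightarrow> 'g \<times> 'z \<Rightarrow> 'g \<times> 'z \<Rightarrow> real" where
  "sum_form Bg Bz p q = Bg (fst p) (fst q) + Bz (snd p) (snd q)"

end

theory Submission
  imports Defs
begin


lemma riesz_form:
  fixes B :: "'a::euclidean_space \<Rightarrow> 'a \<Rightarrow> real"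
  assumes bl: "bilinear B" and nd: "nondegenerate B" and lp: "linear \<phi>"
  shows "\<exists>!x. \<forall>v. B x v = \<phi> v"
proof -
  define M where "M x = (\<Sum>b\<in>Basis. B x b *\<^sub>R b)" for x
  have Minner: "M x \<bullet> v = B x v" for x v
  proof -
    have lin: "linear (B x)" using bl unfolding bilinear_def by auto
    have "B x v = B x (\<Sum>b\<in>Basis. (v \<bullet> b) *\<^sub>R b)" by (simp add: euclidean_representation)
    also have "\<dots> = (\<Sum>b\<in>Basis. (v \<bullet> b) * B x b)"
      by (simp add: linear_sum[OF lin] linear_scale[OF lin])
    also have "\<dots> = (\<Sum>b\<in>Basis. B x b * (b \<bullet> v))"
      by (rule sum.cong) (simp_all add: inner_commute)
    also have "\<dots> = M x \<bullet> v" unfolding M_def by (simp add: inner_sum_left)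
    finally show ?thesis by simp
  qed
  have linM: "linear M"
    unfolding M_def by (rule linearI) (simp_all add: bilinear_ladd[OF bl] bilinear_lmul[OF bl] scaleR_add_left sum.distrib scaleR_sum_right)
  have "inj M"
  proof (rule injI)
    fix x y assume "M x = M y"
    then have "\<forall>v. B (x - y) v = 0" by (simp add: bilinear_lsub[OF bl] Minner[symmetric] inner_diff_left linear_diff[OF linM])
    then show "x = y" using nd unfolding nondegenerate_def by auto
  qed
  then have "surj M" using linear_injective_imp_surjective linM by blast
  define p where "p = (\<Sum>b\<in>Basis. \<phi> b *\<^sub>R b)"
  have pv: "\<phi> v = p \<bullet> v" for v
  proof -
    have "\<phi> v = \<phi> (\<Sum>b\<in>Basis. (v \<bullet> b) *\<^sub>R b)" by (simp add: euclidean_representation)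
    also have "\<dots> = (\<Sum>b\<in>Basis. (v \<bullet> b) * \<phi> b)"
      by (simp add: linear_sum[OF lp] linear_scale[OF lp])
    also have "\<dots> = (\<Sum>b\<in>Basis. \<phi> b * (b \<bullet> v))"
      by (rule sum.cong) (simp_all add: inner_commute)
    also have "\<dots> = p \<bullet> v" unfolding p_def by (simp add: inner_sum_left)
    finally show ?thesis by simp
  qed
  obtain x where "M x = p" using \<open>surj M\<close> by (metis surjD)
  then have ex: "\<forall>v. B x v = \<phi> v" by (simp add: pv Minner[symmetric])
  show ?thesis
  proof (rule ex1I[of _ x])
    show "\<forall>v. B x v = \<phi> v" by fact
    fix y assume "\<forall>v. B y v = \<phi> v"
    then have "\<forall>v. B (y - x) v = 0" using ex by (simp add: bilinear_lsub[OF bl])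
    then show "y = x" using nd unfolding nondegenerate_def by auto
  qed
qed

lemma adjoint_wrt_spec:
  fixes Ba :: "'a::euclidean_space \<Rightarrow> 'a \<Rightarrow> real"
  assumes "bilinear Ba" "nondegenerate Ba" "linear (\<lambda>v. Bb (f v) y)"
  shows "Ba (adjoint_wrt Ba Bb f y) v = Bb (f v) y"
proof -
  have "\<exists>!x. \<forall>v. Ba x v = Bb (f v) y" using riesz_form[OF assms] .
  from theI'[OF this] show ?thesis unfolding adjoint_wrt_def by blast
qed

lemma trace_comm:
  fixes A B :: "'a::euclidean_space \<Rightarrow> 'a"
  assumes lA: "linear A" and lB: "linear B"
  shows "lin_trace (A \<circ> B) = lin_trace (B \<circ> A)"
proof -
  have e1: "A (B b) \<bullet> b = (\<Sum>c\<in>Basis. (B b \<bullet> c) * (A c \<bullet> b))" for b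
  proof -
    have "A (B b) = A (\<Sum>c\<in>Basis. (B b \<bullet> c) *\<^sub>R c)" by (simp add: euclidean_representation)
    also have "\<dots> = (\<Sum>c\<in>Basis. (B b \<bullet> c) *\<^sub>R A c)" by (simp add: linear_sum[OF lA] linear_scale[OF lA])
    finally show ?thesis by (simp add: inner_sum_left)
  qed
  have e2: "B (A c) \<bullet> c = (\<Sum>b\<in>Basis. (A c \<bullet> b) * (B b \<bullet> c))" for c
  proof -
    have "B (A c) = B (\<Sum>b\<in>Basis. (A c \<bullet> b) *\<^sub>R b)" by (simp add: euclidean_representation)
    also have "\<dots> = (\<Sum>b\<in>Basis. (A c \<bullet> b) *\<^sub>R B b)" by (simp add: linear_sum[OF lB] linear_scale[OF lB])
    finally show ?thesis by (simp add: inner_sum_left)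
  qed
  show ?thesis unfolding lin_trace_def o_def e1 e2
    by (subst sum.swap) (simp add: mult.commute)
qed


theorem proposition3p1:
  fixes brg :: "'g::euclidean_space \<Rightarrow> 'g \<Rightarrow> 'g"
    and \<omega> :: "'g \<Rightarrow> 'g \<Rightarrow> 'z::euclidean_space"
    and Bg :: "'g \<Rightarrow> 'g \<Rightarrow> real"
    and Bz :: "'z \<Rightarrow> 'z \<Rightarrow> real"
    and D :: "'g \<Rightarrow> 'g"
  assumes lie: "lie_algebra (ext_bracket brg \<omega>)"
    and nilp: "nilpotent_lie (ext_bracket brg \<omega>)"
    and lor: "lorentzian (sum_form Bg Bz)"
    and center: "lie_center (ext_bracket brg \<omega>) = {0} \<times> UNIV"
    and posz: "positive_definite Bz"
    and symg: "sym_bilinear_form Bg"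
    and hyp: "\<forall>u v w. \<omega> (adjoint_wrt Bg Bg (brg u) v) w + \<omega> v (adjoint_wrt Bg Bg (brg u) w) = 0"
    and Ddef: "\<forall>u v. Bg (D u) v = lin_trace (adjoint_wrt Bg Bz (\<omega> u) \<circ> \<omega> v)"
  shows "derivation brg D"
proof -
  define E where "E = ext_bracket brg \<omega>"
  have bE: "bilinear E" using lie unfolding lie_algebra_def E_def by blast
  have E0: "E x x = 0" for x using lie unfolding lie_algebra_def E_def by blast
  have EJ: "E x (E y z) + E y (E z x) + E z (E x y) = 0" for x y z
    using lie unfolding lie_algebra_def E_def by blast
  have Ep: "E (u,0) (v,0) = (brg u v, \<omega> u v)" for u v by (simp add: E_def ext_bracket_def)
  have la: "brg (u+u') v = brg u v + brg u' v \<and> \<omega> (u+u') v = \<omega> u v + \<omega> u' v" for u u' v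
    using bilinear_ladd[OF bE, of "(u,0)" "(u',0)" "(v,0)"] by (simp add: Ep)
  have ra: "brg v (u+u') = brg v u + brg v u' \<and> \<omega> v (u+u') = \<omega> v u + \<omega> v u'" for u u' v
    using bilinear_radd[OF bE, of "(v,0)" "(u,0)" "(u',0)"] by (simp add: Ep)
  have lm: "brg (c *\<^sub>R u) v = c *\<^sub>R brg u v \<and> \<omega> (c *\<^sub>R u) v = c *\<^sub>R \<omega> u v" for c u v
    using bilinear_lmul[OF bE, of c "(u,0)" "(v,0)"] by (simp add: Ep)
  have rm: "brg v (c *\<^sub>R u) = c *\<^sub>R brg v u \<and> \<omega> v (c *\<^sub>R u) = c *\<^sub>R \<omega> v u" for c u v
    using bilinear_rmul[OF bE, of "(v,0)" c "(u,0)"] by (simp add: Ep)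
  have bb: "bilinear brg" unfolding bilinear_def
    by (auto intro!: linearI simp: la ra lm rm)
  have bw: "bilinear \<omega>" unfolding bilinear_def
    by (auto intro!: linearI simp: la ra lm rm)
  have b0: "brg x x = 0 \<and> \<omega> x x = 0" for x using E0[of "(x,0)"] by (simp add: Ep zero_prod_def)
  have anti: "brg u v = - brg v u \<and> \<omega> u v = - \<omega> v u" for u v
    using b0[of "u+v"] b0[of u] b0[of v] by (simp add: la ra eq_neg_iff_add_eq_0 add.commute)
  have jac: "\<omega> x (brg y z) + \<omega> y (brg z x) + \<omega> z (brg x y) = 0" for x y z
    using EJ[of "(x,0)" "(y,0)" "(z,0)"] by (simp add: E_def ext_bracket_def zero_prod_def)
  have blz: "bilinear Bz" using posz unfolding positive_definite_def sym_bilinear_form_def by blast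
  have blg: "bilinear Bg" using symg unfolding sym_bilinear_form_def by blast
  have sg: "Bg x y = Bg y x" for x y using symg unfolding sym_bilinear_form_def by blast
  have ndg: "nondegenerate Bg" unfolding nondegenerate_def
  proof (intro allI impI)
    fix x assume h: "\<forall>y. Bg x y = 0"
    have "\<forall>q. sum_form Bg Bz (x,0) q = 0"
      using h by (simp add: sum_form_def bilinear_lzero[OF blz])
    then have "(x, 0::'z) = 0" using lor unfolding lorentzian_def nondegenerate_def by blast
    then show "x = 0" by (simp add: zero_prod_def)
  qed
  have ndz: "nondegenerate Bz" unfolding nondegenerate_def
    using posz unfolding positive_definite_def by force
  have eqg: "a = b" if "\<And>v. Bg a v = Bg b v" for a b
  proof -
    have "\<forall>v. Bg (a - b) v = 0" using that by (simp add: bilinear_lsub[OF blg])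
    then show ?thesis using ndg unfolding nondegenerate_def by auto
  qed
  define adj where "adj u = adjoint_wrt Bg Bg (brg u)" for u
  define S where "S u = adjoint_wrt Bg Bz (\<omega> u)" for u
  have lin1: "linear (brg u)" "linear (\<omega> u)" "linear (\<lambda>x. Bg x y)" "linear (\<lambda>x. Bz x z)" for u y z
    using bb bw blg blz unfolding bilinear_def by auto
  have adjs: "Bg (adj u y) v = Bg (brg u v) y" for u y v
    unfolding adj_def
    by (rule adjoint_wrt_spec[OF blg ndg]) (rule linear_compose[OF lin1(1) lin1(3), unfolded o_def])
  have Ss: "Bg (S u x) v = Bz (\<omega> u v) x" for u x v
    unfolding S_def
    by (rule adjoint_wrt_spec[OF blg ndg]) (rule linear_compose[OF lin1(2) lin1(4), unfolded o_def])
  have ladj: "linear (adj u)" for u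
    by (rule linearI; rule eqg)
       (simp_all add: adjs bilinear_ladd[OF blg] bilinear_radd[OF blg] bilinear_lmul[OF blg] bilinear_rmul[OF blg])
  have lS: "linear (S u)" for u
    by (rule linearI; rule eqg)
       (simp_all add: Ss bilinear_ladd[OF blg] bilinear_radd[OF blz] bilinear_lmul[OF blg] bilinear_rmul[OF blz])
  have Sadd: "S (u + u') = (\<lambda>x. S u x + S u' x)" for u u'
    by (rule ext, rule eqg) (simp add: Ss bilinear_ladd[OF blg] bilinear_ladd[OF blz] la)
  have Smul: "S (c *\<^sub>R u) = (\<lambda>x. c *\<^sub>R S u x)" for c u
    by (rule ext, rule eqg) (simp add: Ss bilinear_lmul[OF blg] bilinear_lmul[OF blz] lm)
  have tr_add: "lin_trace (\<lambda>x. f x + g x) = lin_trace f + lin_trace g" for f g :: "'g \<Rightarrow> 'g"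
    unfolding lin_trace_def by (simp add: inner_add_left sum.distrib)
  have tr_diff: "lin_trace (\<lambda>x. f x - g x) = lin_trace f - lin_trace g" for f g :: "'g \<Rightarrow> 'g"
    unfolding lin_trace_def by (simp add: inner_diff_left sum_subtractf)
  have tr_mul: "lin_trace (\<lambda>x. c *\<^sub>R f x) = c * lin_trace f" for c and f :: "'g \<Rightarrow> 'g"
    unfolding lin_trace_def by (simp add: sum_distrib_left)
  have tr_neg: "lin_trace (\<lambda>x. - f x) = - lin_trace f" for f :: "'g \<Rightarrow> 'g"
    unfolding lin_trace_def by (simp add: sum_negf)
  have Dd: "Bg (D u) v = lin_trace (S u \<circ> \<omega> v)" for u v using Ddef unfolding S_def by blast
  have linD: "linear D"
  proof (rule linearI)
    fix x y show "D (x + y) = D x + D y"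
      by (rule eqg) (simp add: Dd bilinear_ladd[OF blg] Sadd o_def tr_add)
  next
    fix c x show "D (c *\<^sub>R x) = c *\<^sub>R D x"
      by (rule eqg) (simp add: Dd bilinear_lmul[OF blg] Smul o_def tr_mul)
  qed
  have Sbr: "S (brg u v) = (\<lambda>x. adj v (S u x) - adj u (S v x))" for u v
  proof (rule ext, rule eqg)
    fix x y
    have a1: "\<omega> (brg u v) y = - \<omega> y (brg u v)" using anti by blast
    have a2: "brg y u = - brg u y" using anti by blast
    have a3: "\<omega> v (brg y u) = - \<omega> v (brg u y)" unfolding a2 by (rule linear_neg[OF lin1(2)])
    have j: "\<omega> y (brg u v) = - (\<omega> u (brg v y) + \<omega> v (brg y u))"
      using jac[of y u v] by (metis add.assoc eq_neg_iff_add_eq_0)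
    have w: "\<omega> (brg u v) y = \<omega> u (brg v y) - \<omega> v (brg u y)"
      unfolding a1 j a3 by simp
    have "Bg (adj v (S u x) - adj u (S v x)) y = Bg (brg v y) (S u x) - Bg (brg u y) (S v x)"
      by (simp add: bilinear_lsub[OF blg] adjs)
    also have "\<dots> = Bz (\<omega> u (brg v y)) x - Bz (\<omega> v (brg u y)) x"
      by (simp only: sg[of "brg v y"] sg[of "brg u y"] Ss)
    also have "\<dots> = Bz (\<omega> (brg u v) y) x" by (simp only: w bilinear_lsub[OF blz])
    also have "\<dots> = Bg (S (brg u v) x) y" by (simp only: Ss)
    finally show "Bg (S (brg u v) x) y = Bg (adj v (S u x) - adj u (S v x)) y" by simp
  qed
  have key: "lin_trace (adj v \<circ> (S u \<circ> \<omega> w)) = - Bg (D u) (adj v w)" for u v w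
  proof -
    have "lin_trace (adj v \<circ> (S u \<circ> \<omega> w)) = lin_trace ((S u \<circ> \<omega> w) \<circ> adj v)"
      by (rule trace_comm[OF ladj linear_compose[OF lin1(2) lS]])
    also have "(S u \<circ> \<omega> w) \<circ> adj v = (\<lambda>x. - (S u \<circ> \<omega> (adj v w)) x)"
    proof
      fix x
      have "\<omega> w (adj v x) = - \<omega> (adj v w) x" using hyp[rule_format, of v w x] unfolding adj_def
        by (simp add: eq_neg_iff_add_eq_0 add.commute)
      then show "((S u \<circ> \<omega> w) \<circ> adj v) x = - (S u \<circ> \<omega> (adj v w)) x"
        by (simp add: linear_neg[OF lS])
    qed
    finally show ?thesis by (simp add: tr_neg Dd o_def)
  qed
  show ?thesis unfolding derivation_def
  proof (intro conjI allI linD)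
    fix u v
    show "D (brg u v) = brg (D u) v + brg u (D v)"
    proof (rule eqg)
      fix w
      have "Bg (D (brg u v)) w = lin_trace (\<lambda>x. (adj v \<circ> (S u \<circ> \<omega> w)) x - (adj u \<circ> (S v \<circ> \<omega> w)) x)"
        by (simp add: Dd Sbr o_def)
      also have "\<dots> = - Bg (D u) (adj v w) + Bg (D v) (adj u w)"
        by (simp add: tr_diff key[unfolded o_def])
      also have "\<dots> = Bg (brg (D u) v + brg u (D v)) w"
        using anti[of "D u" v]
        by (simp only: bilinear_ladd[OF blg] bilinear_lneg[OF blg] adjs sg[of "D u"] sg[of "D v"])
      finally show "Bg (D (brg u v)) w = Bg (brg (D u) v + brg u (D v)) w" .
    qed
  qed
qed

end
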